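(* Every WM set $S\subset\mathbb{N}$ contains an IP-set, i.e. there is a sequence $p_1,p_2,\dots$ of natural numbers such that $\{p_{i_1}+\dots+p_{i_k}: k\in\mathbb{N},\ i_1<\dots<i_k\}\subset S$.
   Context: $\mathbb{N}=\{1,2,\dots\}$. An IP-set is a set of the form $\{p_{i_1}+\dots+p_{i_k}: k\in\mathbb{N},\ i_1<\dots<i_k\}$ for an infinite sequence $(p_i)$ of natural numbers (not necessarily distinct). $\Omega=\{0,1\}^{\mathbb{N}}$ with product topology and left shift $T$; $X_{1_S}$ is the closure of $\{T^n1_S:n\ge0\}$. A point $\xi$ is generic for $(X,\mu,T)$ if $\frac1N\sum_{n=0}^{N-1}f(T^n\xi)\to\int f\,d\mu$ for all continuous $f$. $d(S)=\lim_N\frac1N|S\cap\{1,\dots,N\}|$. $S$ is a WM set if for some $T$-invariant Borel probability $\mu$ on $X_{1_S}$, $1_S$ is generic for $(X_{1_S},\mu,T)$, this system is weakly mixing, and $d(S)>0$. *)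

theory Defs
  imports "HOL-Analysis.Analysis" "HOL-Probability.Probability"
begin

text \<open>Omega = {0,1}^N is modelled as nat \<Rightarrow> bool with the product topology
  (bool carries the discrete topology). Coordinate i corresponds to position i+1.\<close>

definition shift :: "(nat \<Rightarrow> bool) \<Rightarrow> (nat \<Rightarrow> bool)" where
  "shift x = (\<lambda>i. x (Suc i))"

definition indic_seq :: "nat set \<Rightarrow> (nat \<Rightarrow> bool)" where
  "indic_seq S = (\<lambda>i. Suc i \<in> S)"

definition orbit_closure :: "(nat \<Rightarrow> bool) \<Rightarrow> (nat \<Rightarrow> bool) set" where
  "orbit_closure x = closure {(shift ^^ n) x | n. True}"

definition invariant_borel_prob :: "(nat \<Rightarrow> bool) set \<Rightarrow> (nat \<Rightarrow> bool) measure \<Rightarrow> bool" where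
  "invariant_borel_prob X \<mu> \<longleftrightarrow>
     sets \<mu> = sets (restrict_space borel X) \<and> prob_space \<mu> \<and>
     shift \<in> measurable \<mu> \<mu> \<and>
     (\<forall>A\<in>sets \<mu>. measure \<mu> (shift -` A \<inter> space \<mu>) = measure \<mu> A)"

definition generic_point :: "(nat \<Rightarrow> bool) set \<Rightarrow> (nat \<Rightarrow> bool) measure \<Rightarrow> (nat \<Rightarrow> bool) \<Rightarrow> bool" where
  "generic_point X \<mu> \<xi> \<longleftrightarrow>
     (\<forall>f :: (nat \<Rightarrow> bool) \<Rightarrow> real. continuous_on X f \<longrightarrow>
        (\<lambda>N. (\<Sum>n<N. f ((shift ^^ n) \<xi>)) / real N) \<longlonglongrightarrow> (\<integral>x. f x \<partial>\<mu>))"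

definition weakly_mixing :: "(nat \<Rightarrow> bool) measure \<Rightarrow> bool" where
  "weakly_mixing \<mu> \<longleftrightarrow>
     (\<forall>A\<in>sets \<mu>. \<forall>B\<in>sets \<mu>.
        (\<lambda>N. (\<Sum>n<N. \<bar>measure \<mu> ((shift ^^ n) -` A \<inter> space \<mu> \<inter> B)
                        - measure \<mu> A * measure \<mu> B\<bar>) / real N) \<longlonglongrightarrow> 0)"

definition has_density :: "nat set \<Rightarrow> real \<Rightarrow> bool" where
  "has_density S d \<longleftrightarrow> (\<lambda>N. real (card (S \<inter> {1..N})) / real N) \<longlonglongrightarrow> d"

definition WM_set :: "nat set \<Rightarrow> bool" where
  "WM_set S \<longleftrightarrow> (\<exists>\<mu>.
      invariant_borel_prob (orbit_closure (indic_seq S)) \<mu> \<and>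
      generic_point (orbit_closure (indic_seq S)) \<mu> (indic_seq S) \<and>
      weakly_mixing \<mu>) \<and>
    (\<exists>d>0. has_density S d)"

end

theory Submission
  imports Defs
begin

definition cyl :: "nat set \<Rightarrow> (nat \<Rightarrow> bool) set" where
  "cyl P = {x. \<forall>s\<in>P. x s}"

lemma coord_cont: "continuous_on UNIV (\<lambda>x::nat\<Rightarrow>bool. x s)"
  by (rule continuous_on_product_coordinates)

lemma coord_open: "open {x::nat\<Rightarrow>bool. x s}"
proof -
  have "open ((\<lambda>x::nat\<Rightarrow>bool. x s) -` {True} \<inter> UNIV)"
    by (rule coord_cont[of s, unfolded continuous_on_open_vimage[OF open_UNIV], rule_format]) (rule discrete_topology_class.open_discrete)
  thus ?thesis by (simp add: vimage_def)
qed

lemma coord_closed: "closed {x::nat\<Rightarrow>bool. x s}"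
proof -
  have "open ((\<lambda>x::nat\<Rightarrow>bool. x s) -` {False} \<inter> UNIV)"
    by (rule coord_cont[of s, unfolded continuous_on_open_vimage[OF open_UNIV], rule_format]) (rule discrete_topology_class.open_discrete)
  moreover have e: "(\<lambda>x::nat\<Rightarrow>bool. x s) -` {False} \<inter> UNIV = - {x. x s}" by auto
  ultimately have "open (- {x::nat\<Rightarrow>bool. x s})" by (simp only:)
  thus ?thesis unfolding closed_def .
qed

lemma cyl_open: "finite P \<Longrightarrow> open (cyl P)"
proof -
  assume "finite P"
  moreover have "cyl P = (\<Inter>s\<in>P. {x. x s})" by (auto simp: cyl_def)
  ultimately show ?thesis using coord_open by auto
qed

lemma cyl_closed: "closed (cyl P)"
proof -
  have "cyl P = (\<Inter>s\<in>P. {x. x s})" by (auto simp: cyl_def)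
  thus ?thesis using coord_closed by auto
qed

lemma cyl_cont: "finite P \<Longrightarrow> continuous_on X (indicator (cyl P) :: _ \<Rightarrow> real)"
proof -
  assume f: "finite P"
  have "continuous_on UNIV (indicator (cyl P) :: _ \<Rightarrow> real)"
  proof (subst continuous_on_open_vimage[OF open_UNIV], intro allI impI)
    fix V :: "real set" assume "open V"
    have "indicator (cyl P) -` V = (if 1 \<in> V then cyl P else {}) \<union> (if 0 \<in> V then - cyl P else {})"
      by (auto simp: indicator_def of_bool_def split: if_splits)
    have o1: "open (cyl P)" by (rule cyl_open[OF f])
    have o2: "open (- cyl P)" using cyl_closed[of P] unfolding closed_def .
    have "open ((if 1 \<in> V then cyl P else {}) \<union> (if 0 \<in> V then - cyl P else {}))"
      using o1 o2 by (intro open_Un) auto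
    thus "open (indicator (cyl P) -` V \<inter> UNIV)" using \<open>indicator (cyl P) -` V = _\<close> by simp
  qed
  thus ?thesis using continuous_on_subset by blast
qed

lemma shift_pow: "(shift ^^ n) x s = x (n + s)"
  by (induction n arbitrary: x s) (auto simp: shift_def)

lemma comb:
  fixes a b :: "nat \<Rightarrow> real"
  assumes a01: "\<And>m. 0 \<le> a m \<and> a m \<le> 1" and b0: "\<And>n. b n \<ge> 0"
    and la: "(\<lambda>N. (\<Sum>n<N. a n) / real N) \<longlonglongrightarrow> \<beta>" and bp: "\<beta> > 0"
    and lb: "(\<lambda>N. (\<Sum>n<N. b n) / real N) \<longlonglongrightarrow> 0"
  shows "\<exists>m. a m \<noteq> 0 \<and> b (Suc m) < \<beta>\<^sup>2"
proof (rule ccontr)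
  assume "\<not> ?thesis"
  hence H: "\<And>m. a m \<noteq> 0 \<Longrightarrow> b (Suc m) \<ge> \<beta>\<^sup>2" by (meson not_less)
  have b2: "\<beta>\<^sup>2 > 0" using bp by simp
  have am: "a m \<le> b (Suc m) / \<beta>\<^sup>2" for m
  proof (cases "a m = 0")
    case True thus ?thesis using b0 b2 by simp
  next
    case False
    hence "1 \<le> b (Suc m) / \<beta>\<^sup>2" using H[OF False] b2 by (simp add: field_simps)
    thus ?thesis using a01[of m] by linarith
  qed
  have sb: "(\<Sum>n<N. a n) \<le> (\<Sum>n<Suc N. b n) / \<beta>\<^sup>2" for N
  proof -
    have "(\<Sum>n<N. a n) \<le> (\<Sum>n<N. b (Suc n) / \<beta>\<^sup>2)" by (rule sum_mono) (use am in auto)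
    also have "\<dots> = (\<Sum>n<N. b (Suc n)) / \<beta>\<^sup>2" by (simp add: sum_divide_distrib)
    also have "\<dots> \<le> (\<Sum>n<Suc N. b n) / \<beta>\<^sup>2"
    proof -
      have "(\<Sum>n<N. b (Suc n)) \<le> (\<Sum>n<Suc N. b n)"
        unfolding sum.lessThan_Suc_shift using b0[of 0] by simp
      thus ?thesis using b2 by (simp add: divide_right_mono)
    qed
    finally show ?thesis .
  qed
  define c where "c N = ((\<Sum>n<Suc N. b n) / real (Suc N)) * (real (Suc N) / real N) / \<beta>\<^sup>2" for N
  have "c \<longlonglongrightarrow> 0 * 1 / \<beta>\<^sup>2"
    unfolding c_def
    by (intro tendsto_intros LIMSEQ_Suc[OF lb] LIMSEQ_Suc_n_over_n) (use bp in simp)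
  hence lc: "c \<longlonglongrightarrow> 0" by simp
  have ev: "\<forall>\<^sub>F N in sequentially. (\<Sum>n<N. a n) / real N \<le> c N"
    using eventually_ge_at_top[of 1]
  proof eventually_elim
    case (elim N)
    have gen: "x / r * (r / n) / y = x / y / n" if "r \<noteq> 0" for x r n y :: real
      using that by (simp add: divide_simps)
    have cN: "c N = (\<Sum>n<Suc N. b n) / \<beta>\<^sup>2 / real N" unfolding c_def
      by (rule gen) simp
    have "(\<Sum>n<N. a n) / real N \<le> (\<Sum>n<Suc N. b n) / \<beta>\<^sup>2 / real N"
      by (rule divide_right_mono[OF sb]) simp
    thus ?case unfolding cN .
  qed
  have "\<beta> \<le> 0" using tendsto_le[OF _ lc la ev] by simp
  thus False using bp by simp
qed

lemma card_count: "(\<Sum>n<N. (if Suc n \<in> S then 1 else 0 :: real)) = real (card (S \<inter> {1..N}))"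
proof (induction N)
  case 0 thus ?case by simp
next
  case (Suc N)
  have fin: "finite (S \<inter> {1..N})" by simp
  show ?case
  proof (cases "Suc N \<in> S")
    case True
    hence "S \<inter> {1..Suc N} = insert (Suc N) (S \<inter> {1..N})" by auto
    thus ?thesis using Suc True fin by simp
  next
    case False
    hence "S \<inter> {1..Suc N} = S \<inter> {1..N}" using le_Suc_eq by auto
    thus ?thesis using Suc False by simp
  qed
qed

theorem mainTheorem7:
  fixes S :: "nat set"
  assumes "S \<subseteq> {1..}" and "WM_set S"
  shows "\<exists>p :: nat \<Rightarrow> nat. (\<forall>i. p i \<ge> 1) \<and>
           (\<forall>F. finite F \<and> F \<noteq> {} \<longrightarrow> (\<Sum>i\<in>F. p i) \<in> S)"
proof -
  define \<xi> where "\<xi> = indic_seq S"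
  define X where "X = orbit_closure \<xi>"
  obtain \<mu> d where inv: "invariant_borel_prob X \<mu>" and gen: "generic_point X \<mu> \<xi>"
    and wm: "weakly_mixing \<mu>" and dpos: "d > 0" and dens: "has_density S d"
    using assms(2) unfolding WM_set_def X_def \<xi>_def by blast
  have setsm: "sets \<mu> = sets (restrict_space borel X)" using inv by (simp add: invariant_borel_prob_def)
  have spm: "space \<mu> = X"
    using sets_eq_imp_space_eq[OF setsm] by (simp add: space_restrict_space)
  have shX: "shift x \<in> X" if "x \<in> X" for x
    using inv that spm measurable_space unfolding invariant_borel_prob_def by metis
  have shnX: "(shift ^^ n) x \<in> X" if "x \<in> X" for x n
    using that by (induction n) (auto intro: shX)
  have meas: "cyl P \<inter> X \<in> sets \<mu>" if "finite P" for P
  proof -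
    have "cyl P \<in> sets borel" using cyl_open[OF that] by auto
    hence "X \<inter> cyl P \<in> sets (restrict_space borel X)" by (auto simp: sets_restrict_space)
    thus ?thesis using setsm by (simp add: Int_commute)
  qed
  have avg: "(\<lambda>N. (\<Sum>n<N. indicator (cyl P) ((shift ^^ n) \<xi>)) / real N) \<longlonglongrightarrow> measure \<mu> (cyl P \<inter> X)"
    if "finite P" for P
  proof -
    have "(\<lambda>N. (\<Sum>n<N. indicator (cyl P) ((shift ^^ n) \<xi>)) / real N) \<longlonglongrightarrow> integral\<^sup>L \<mu> (indicator (cyl P))"
      using gen cyl_cont[OF that, of X] unfolding generic_point_def by blast
    thus ?thesis by (simp add: spm)
  qed
  define \<beta> where "\<beta> P = measure \<mu> (cyl P \<inter> X)" for P
  have mix: "(\<lambda>N. (\<Sum>n<N. \<bar>measure \<mu> (cyl (P \<union> (+) n ` P) \<inter> X) - \<beta> P * \<beta> P\<bar>) / real N) \<longlonglongrightarrow> 0"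
    if "finite P" for P
  proof -
    have eq: "(shift ^^ n) -` (cyl P \<inter> X) \<inter> space \<mu> \<inter> (cyl P \<inter> X) = cyl (P \<union> (+) n ` P) \<inter> X" for n
      using shnX by (auto simp: spm cyl_def shift_pow)
    have "(\<lambda>N. (\<Sum>n<N. \<bar>measure \<mu> ((shift ^^ n) -` (cyl P \<inter> X) \<inter> space \<mu> \<inter> (cyl P \<inter> X))
            - measure \<mu> (cyl P \<inter> X) * measure \<mu> (cyl P \<inter> X)\<bar>) / real N) \<longlonglongrightarrow> 0"
      using wm meas[OF that] unfolding weakly_mixing_def by blast
    thus ?thesis unfolding \<beta>_def eq .
  qed
  have step: "\<exists>q\<ge>1. (\<forall>s\<in>P. q + s \<in> S) \<and> \<beta> (P \<union> (+) q ` P) > 0"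
    if fP: "finite P" and pos: "\<beta> P > 0" for P
  proof -
    have "\<exists>m. indicator (cyl P) ((shift ^^ m) \<xi>) \<noteq> (0::real) \<and>
       \<bar>measure \<mu> (cyl (P \<union> (+) (Suc m) ` P) \<inter> X) - \<beta> P * \<beta> P\<bar> < (\<beta> P)\<^sup>2"
    proof (rule comb[where a="\<lambda>m. indicator (cyl P) ((shift ^^ m) \<xi>)" and
          b="\<lambda>n. \<bar>measure \<mu> (cyl (P \<union> (+) n ` P) \<inter> X) - \<beta> P * \<beta> P\<bar>" and \<beta>="\<beta> P"])
      show "(\<lambda>N. (\<Sum>n<N. indicator (cyl P) ((shift ^^ n) \<xi>)) / real N) \<longlonglongrightarrow> \<beta> P"
        using avg[OF fP] unfolding \<beta>_def .
      show "(\<lambda>N. (\<Sum>n<N. \<bar>measure \<mu> (cyl (P \<union> (+) n ` P) \<inter> X) - \<beta> P * \<beta> P\<bar>) / real N) \<longlonglongrightarrow> 0"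
        using mix[OF fP] .
    qed (auto simp: indicator_def pos)
    then obtain m where m1: "indicator (cyl P) ((shift ^^ m) \<xi>) \<noteq> (0::real)"
      and m2: "\<bar>measure \<mu> (cyl (P \<union> (+) (Suc m) ` P) \<inter> X) - \<beta> P * \<beta> P\<bar> < (\<beta> P)\<^sup>2" by blast
    have "\<forall>s\<in>P. Suc m + s \<in> S"
      using m1 by (auto simp: indicator_def cyl_def shift_pow \<xi>_def indic_seq_def split: if_splits)
    moreover have "\<beta> (P \<union> (+) (Suc m) ` P) > 0"
      using m2 unfolding \<beta>_def by (simp add: power2_eq_square abs_less_iff)
    ultimately show ?thesis by (intro exI[of _ "Suc m"]) auto
  qed
  have base: "\<beta> {0} > 0"
  proof -
    have "(\<lambda>N. (\<Sum>n<N. indicator (cyl {0}) ((shift ^^ n) \<xi>)) / real N) \<longlonglongrightarrow> d"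
    proof -
      have "(\<Sum>n<N. indicator (cyl {0}) ((shift ^^ n) \<xi>)) = real (card (S \<inter> {1..N}))" for N
        unfolding card_count[symmetric]
        by (rule sum.cong) (auto simp: indicator_def cyl_def shift_pow \<xi>_def indic_seq_def)
      thus ?thesis using dens unfolding has_density_def by simp
    qed
    hence "\<beta> {0} = d" using avg[of "{0}"] LIMSEQ_unique unfolding \<beta>_def by auto
    thus ?thesis using dpos by simp
  qed
  define Q where "Q P = (SOME q. q \<ge> 1 \<and> (\<forall>s\<in>P. q + s \<in> S) \<and> \<beta> (P \<union> (+) q ` P) > 0)" for P
  have Q: "Q P \<ge> 1 \<and> (\<forall>s\<in>P. Q P + s \<in> S) \<and> \<beta> (P \<union> (+) (Q P) ` P) > 0"
    if "finite P" "\<beta> P > 0" for P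
    unfolding Q_def by (rule someI_ex) (use step[OF that] in blast)
  define Ps where "Ps = rec_nat {0} (\<lambda>k P. P \<union> (+) (Q P) ` P)"
  have Ps0: "Ps 0 = {0}" and PsS: "Ps (Suc k) = Ps k \<union> (+) (Q (Ps k)) ` Ps k" for k
    by (simp_all add: Ps_def)
  have invk: "finite (Ps k) \<and> \<beta> (Ps k) > 0" for k
  proof (induction k)
    case 0 show ?case using base by (simp add: Ps0)
  next
    case (Suc k)
    hence f: "finite (Ps k)" and b: "\<beta> (Ps k) > 0" by auto
    show ?case using Q[OF f b] f by (simp add: PsS)
  qed
  define p where "p k = Q (Ps k)" for k
  have pk: "p k \<ge> 1 \<and> (\<forall>s\<in>Ps k. p k + s \<in> S)" for k
    using Q[OF conjunct1[OF invk] conjunct2[OF invk]] unfolding p_def by blast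
  have sums: "F \<subseteq> {..<k} \<Longrightarrow> sum p F \<in> Ps k" for F k
  proof (induction k arbitrary: F)
    case 0 thus ?case by (simp add: Ps0)
  next
    case (Suc k)
    show ?case
    proof (cases "k \<in> F")
      case True
      have fin: "finite F" using Suc.prems finite_subset by blast
      have "F - {k} \<subseteq> {..<k}" using Suc.prems by auto
      hence "sum p (F - {k}) \<in> Ps k" by (rule Suc.IH)
      moreover have "sum p F = p k + sum p (F - {k})" using True fin by (simp add: sum.remove)
      ultimately show ?thesis by (simp add: PsS p_def)
    next
      case False
      hence "F \<subseteq> {..<k}" using Suc.prems by (auto simp: less_Suc_eq)
      thus ?thesis using Suc.IH by (simp add: PsS)
    qed
  qed
  show ?thesis
  proof (intro exI[of _ p] conjI allI impI)
    fix i show "p i \<ge> 1" using pk by blast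
  next
    fix F :: "nat set" assume F: "finite F \<and> F \<noteq> {}"
    define k where "k = Max F"
    have kF: "k \<in> F" using F by (simp add: k_def)
    have "F - {k} \<subseteq> {..<k}" using F by (auto simp: k_def) (meson Max_ge le_neq_implies_less)
    hence "sum p (F - {k}) \<in> Ps k" by (rule sums)
    moreover have "sum p F = p k + sum p (F - {k})" using kF F by (simp add: sum.remove)
    ultimately show "sum p F \<in> S" using pk by auto
  qed
qed

end
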